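(* For every even integer $m\ge 4$ there exist a positive integer $n$ and a tensor in $T_{m,n}$ that is a $B$ tensor but not a $P$ tensor, and a tensor in $T_{m,n}$ that is a $B_0$ tensor but not a $P_0$ tensor.
   Context: $T_{m,n}$ denotes the set of real $m$th order $n$-dimensional tensors $\mathbb{A}=(a_{i_1i_2\ldots i_m})$ with $i_j\in[n]=\{1,\ldots,n\}$. For $x\in\mathbb{R}^n$, $(\mathbb{A}x^{m-1})_i=\sum_{i_2,\ldots,i_m=1}^n a_{ii_2\ldots i_m}x_{i_2}\cdots x_{i_m}$. $\mathbb{A}$ is a $P$ tensor if for every nonzero $x\in\mathbb{R}^n$, $\max_{i\in[n]}x_i(\mathbb{A}x^{m-1})_i>0$; it is a $P_0$ tensor if for every nonzero $x\in\mathbb{R}^n$ there is $i\in[n]$ with $x_i\ne0$ and $x_i(\mathbb{A}x^{m-1})_i\ge0$. $\mathbb{A}$ is a $B$ tensor if for all $i\in[n]$, $\sum_{i_2,\ldots,i_m=1}^n a_{ii_2\ldots i_m}>0$ and $\frac{1}{n^{m-1}}\sum_{i_2,\ldots,i_m=1}^n a_{ii_2\ldots i_m}>a_{ij_2\ldots j_m}$ for all $(j_2,\ldots,j_m)\neq(i,\ldots,i)$. $\mathbb{A}$ is a $B_0$ tensor if for all $i\in[n]$, $\sum_{i_2,\ldots,i_m=1}^n a_{ii_2\ldots i_m}\ge0$ and $\frac{1}{n^{m-1}}\sum_{i_2,\ldots,i_m=1}^n a_{ii_2\ldots i_m}\ge a_{ij_2\ldots j_m}$ for all $(j_2,\ldots,j_m)\neq(i,\ldots,i)$.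 *)

theory Defs
  imports Main Complex_Main
begin

text \<open>A real tensor of order m and dimension n is represented as a function
  A :: nat list \<Rightarrow> real, where the entry a_{i_1 ... i_m} is A [i_1,...,i_m];
  indices are 0-based, ranging over {0..<n}. Only values on index lists of
  length m with entries < n are relevant. Vectors in R^n are functions
  x :: nat \<Rightarrow> real, of which only the values at 0..<n matter.\<close>

definition idx :: "nat \<Rightarrow> nat \<Rightarrow> nat list set" where
  "idx k n = {is. length is = k \<and> set is \<subseteq> {..<n}}"

definition tvec :: "nat \<Rightarrow> nat \<Rightarrow> (nat list \<Rightarrow> real) \<Rightarrow> (nat \<Rightarrow> real) \<Rightarrow> nat \<Rightarrow> real" where
  "tvec m n A x i = (\<Sum>is\<in>idx (m - 1) n. A (i # is) * prod_list (map x is))"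

definition nonzero_vec :: "nat \<Rightarrow> (nat \<Rightarrow> real) \<Rightarrow> bool" where
  "nonzero_vec n x \<longleftrightarrow> (\<exists>i<n. x i \<noteq> 0)"

definition P_tensor :: "nat \<Rightarrow> nat \<Rightarrow> (nat list \<Rightarrow> real) \<Rightarrow> bool" where
  "P_tensor m n A \<longleftrightarrow>
     (\<forall>x. nonzero_vec n x \<longrightarrow> Max ((\<lambda>i. x i * tvec m n A x i) ` {..<n}) > 0)"

definition P0_tensor :: "nat \<Rightarrow> nat \<Rightarrow> (nat list \<Rightarrow> real) \<Rightarrow> bool" where
  "P0_tensor m n A \<longleftrightarrow>
     (\<forall>x. nonzero_vec n x \<longrightarrow> (\<exists>i<n. x i \<noteq> 0 \<and> x i * tvec m n A x i \<ge> 0))"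

definition row_sum :: "nat \<Rightarrow> nat \<Rightarrow> (nat list \<Rightarrow> real) \<Rightarrow> nat \<Rightarrow> real" where
  "row_sum m n A i = (\<Sum>is\<in>idx (m - 1) n. A (i # is))"

definition B_tensor :: "nat \<Rightarrow> nat \<Rightarrow> (nat list \<Rightarrow> real) \<Rightarrow> bool" where
  "B_tensor m n A \<longleftrightarrow>
     (\<forall>i<n. row_sum m n A i > 0 \<and>
        (\<forall>js\<in>idx (m - 1) n. js \<noteq> replicate (m - 1) i \<longrightarrow>
            row_sum m n A i / real n ^ (m - 1) > A (i # js)))"

definition B0_tensor :: "nat \<Rightarrow> nat \<Rightarrow> (nat list \<Rightarrow> real) \<Rightarrow> bool" where
  "B0_tensor m n A \<longleftrightarrow>
     (\<forall>i<n. row_sum m n A i \<ge> 0 \<and>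
        (\<forall>js\<in>idx (m - 1) n. js \<noteq> replicate (m - 1) i \<longrightarrow>
            row_sum m n A i / real n ^ (m - 1) \<ge> A (i # js)))"

end

theory Submission
  imports Defs
begin

lemma idx_Suc: "idx (Suc k) n = (\<lambda>(i,is). i # is) ` ({..<n} \<times> idx k n)"
  unfolding idx_def
  by (auto simp: image_iff length_Suc_conv)

lemma finite_idx: "finite (idx k n)"
  unfolding idx_def using finite_lists_length_eq[of "{..<n}" k]
  by (simp add: conj_commute)

lemma sum_idx_prod: "(\<Sum>is\<in>idx k n. prod_list (map (x::nat \<Rightarrow> real) is)) = (\<Sum>i<n. x i) ^ k"
proof (induction k)
  case 0
  have "idx 0 n = {[]}" unfolding idx_def by auto
  then show ?case by simp
next
  case (Suc k)
  have inj: "inj_on (\<lambda>(i,is). i # is) ({..<n} \<times> idx k n)"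
    by (auto simp: inj_on_def)
  have "(\<Sum>is\<in>idx (Suc k) n. prod_list (map x is))
      = (\<Sum>p\<in>{..<n} \<times> idx k n. x (fst p) * prod_list (map x (snd p)))"
    unfolding idx_Suc by (subst sum.reindex[OF inj]) (auto intro!: sum.cong)
  also have "\<dots> = (\<Sum>i<n. \<Sum>is\<in>idx k n. x i * prod_list (map x is))"
    by (simp add: sum.cartesian_product split_def)
  also have "\<dots> = (\<Sum>i<n. x i) * (\<Sum>is\<in>idx k n. prod_list (map x is))"
    by (simp add: sum_product)
  finally show ?case using Suc by simp
qed

lemma prod_list_ones: "prod_list (map (\<lambda>_. 1::real) xs) = 1"
  by (induct xs) auto

lemma card_idx: "real (card (idx k n)) = real n ^ k"
proof -
  have "(\<Sum>is\<in>idx k n. prod_list (map (\<lambda>_. 1::real) is)) = (\<Sum>is\<in>idx k n. 1)"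
    by (intro sum.cong) (auto simp only: prod_list_ones)
  also have "\<dots> = real (card (idx k n))" by simp
  moreover have "(\<Sum>is\<in>idx k n. prod_list (map (\<lambda>_. 1::real) is)) = real n ^ k"
    using sum_idx_prod[where x="\<lambda>_. 1::real" and k=k and n=n] by simp
  ultimately show ?thesis by simp
qed

theorem proposition3p1:
  fixes m :: nat
  assumes "even m" and "m \<ge> 4"
  shows "\<exists>n>0. (\<exists>A. B_tensor m n A \<and> \<not> P_tensor m n A) \<and>
                (\<exists>A. B0_tensor m n A \<and> \<not> P0_tensor m n A)"
proof -
  define K :: real where "K = 2 ^ m"
  define d where "d i = replicate (m - 1) i" for i :: nat
  define s where "s i = [0,0] @ replicate (m - 3) i" for i :: nat
  define A :: "nat list \<Rightarrow> real" where "A l = (if hd l = 0 then K + (if tl l = d 0 then 1 else 0)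
      else (if tl l = d (hd l) then 2 else if tl l = s (hd l) then -1 else 0))" for l
  define x :: "nat \<Rightarrow> real" where "x i = (if i = 0 then -2 else 1)" for i
  define N :: real where "N = real 4 ^ (m - 1)"
  have N: "real (card (idx (m - 1) 4)) = N" unfolding N_def by (rule card_idx)
  have Npos: "N > 0" unfolding N_def by simp
  have Kpos: "K > 0" unfolding K_def by simp
  have A0: "A (0 # is) = K + (if is = d 0 then 1 else 0)" for "is" by (simp add: A_def)
  have Ai: "i \<noteq> 0 \<Longrightarrow> A (i # is) = (if is = d i then 2 else if is = s i then -1 else 0)" for i "is"
    by (simp add: A_def)
  have dmem: "i < 4 \<Longrightarrow> d i \<in> idx (m - 1) 4" for i by (auto simp: d_def idx_def)
  have smem: "i < 4 \<Longrightarrow> s i \<in> idx (m - 1) 4" for i using assms(2) by (auto simp: s_def idx_def)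
  have ds: "i \<noteq> 0 \<Longrightarrow> d i \<noteq> s i" for i
  proof
    assume "i \<noteq> 0" "d i = s i"
    then have "hd (d i) = hd (s i)" by simp
    moreover have "hd (d i) = i" using assms(2) by (simp add: d_def hd_replicate)
    ultimately show False using \<open>i \<noteq> 0\<close> by (simp add: s_def)
  qed
  have S: "(\<Sum>i<4. x i) = 1" by (simp add: x_def numeral_eq_Suc)
  have gen: "(\<Sum>is\<in>idx (m - 1) 4. (if is = d i then a else if is = s i then b else 0) * f is)
      = a * f (d i) + b * f (s i)" if "i < 4" "i \<noteq> 0" for i a b and f :: "nat list \<Rightarrow> real"
  proof -
    have "(\<Sum>is\<in>idx (m - 1) 4. (if is = d i then a else if is = s i then b else 0) * f is)
       = (\<Sum>is\<in>idx (m - 1) 4. (if is = d i then a * f (d i) else 0) + (if is = s i then b * f (s i) else 0))"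
      using ds[OF that(2)] by (intro sum.cong) auto
    also have "\<dots> = a * f (d i) + b * f (s i)"
      using dmem[OF that(1)] smem[OF that(1)] by (simp add: sum.distrib finite_idx)
    finally show ?thesis .
  qed
  have tv_i: "tvec m 4 A x i = -2" if "i < 4" "i \<noteq> 0" for i
  proof -
    have "tvec m 4 A x i = 2 * prod_list (map x (d i)) + (-1) * prod_list (map x (s i))"
      unfolding tvec_def using gen[OF that, of 2 "-1" "\<lambda>is. prod_list (map x is)"] Ai[OF that(2)]
      by simp
    also have "\<dots> = -2" using that by (simp add: d_def s_def x_def)
    finally show ?thesis .
  qed
  have rs_i: "row_sum m 4 A i = 1" if "i < 4" "i \<noteq> 0" for i
  proof -
    have "row_sum m 4 A i = 2 * 1 + (-1) * 1"
      unfolding row_sum_def using gen[OF that, of 2 "-1" "\<lambda>is. 1"] Ai[OF that(2)]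
      by simp
    then show ?thesis by simp
  qed
  have sum0: "(\<Sum>is\<in>idx (m - 1) 4. (K + (if is = d 0 then 1 else 0)) * f is)
      = K * (\<Sum>is\<in>idx (m - 1) 4. f is) + f (d 0)" for f :: "nat list \<Rightarrow> real"
  proof -
    have "(\<Sum>is\<in>idx (m - 1) 4. (K + (if is = d 0 then 1 else 0)) * f is)
       = (\<Sum>is\<in>idx (m - 1) 4. K * f is + (if is = d 0 then f (d 0) else 0))"
      by (intro sum.cong) (auto simp: distrib_right)
    also have "\<dots> = K * (\<Sum>is\<in>idx (m - 1) 4. f is) + f (d 0)"
      using dmem[of 0] by (simp add: sum.distrib sum_distrib_left finite_idx)
    finally show ?thesis .
  qed
  have tv_0: "tvec m 4 A x 0 = K + (-2) ^ (m - 1)"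
    unfolding tvec_def A0 sum0 sum_idx_prod S by (simp add: d_def x_def)
  have rs_0: "row_sum m 4 A 0 = K * N + 1"
    unfolding row_sum_def A0 using sum0[of "\<lambda>_. 1"] N by simp
  have neg: "x i * tvec m 4 A x i < 0" if "i < 4" for i
  proof (cases "i = 0")
    case True
    have "(-2::real) ^ (m - 1) = - (2 ^ (m - 1))" using assms by (simp add: power_minus_odd)
    moreover have "(2::real) ^ (m - 1) < K" unfolding K_def using assms(2) by simp
    ultimately show ?thesis using True tv_0 by (simp add: x_def)
  next
    case False
    then show ?thesis using tv_i[OF that False] by (simp add: x_def)
  qed
  have nz: "nonzero_vec 4 x" unfolding nonzero_vec_def by (auto simp: x_def)
  have B: "B_tensor m 4 A"
    unfolding B_tensor_def
  proof (intro allI impI conjI ballI)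
    fix i :: nat and js assume i: "i < 4"
    show "row_sum m 4 A i > 0"
      using rs_i[OF i] rs_0 Kpos Npos by (cases "i = 0") (auto simp: add_pos_pos)
    assume js: "js \<in> idx (m - 1) 4" "js \<noteq> replicate (m - 1) i"
    show "row_sum m 4 A i / real 4 ^ (m - 1) > A (i # js)"
    proof (cases "i = 0")
      case True
      have "row_sum m 4 A i / real 4 ^ (m - 1) = K + 1 / N"
        using True rs_0 Npos by (simp add: N_def field_simps)
      moreover have "A (i # js) = K" using True js by (simp add: A0 d_def)
      ultimately show ?thesis using Npos by simp
    next
      case False
      have "row_sum m 4 A i / real 4 ^ (m - 1) > 0" using rs_i[OF i False] by simp
      moreover have "A (i # js) \<le> 0" using False js by (simp add: Ai d_def)
      ultimately show ?thesis by linarith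
    qed
  qed
  have B0: "B0_tensor m 4 A"
    using B unfolding B_tensor_def B0_tensor_def by (auto intro: less_imp_le)
  have nP: "\<not> P_tensor m 4 A"
  proof
    assume "P_tensor m 4 A"
    then have "Max ((\<lambda>i. x i * tvec m 4 A x i) ` {..<4}) > 0"
      using nz unfolding P_tensor_def by blast
    moreover have "Max ((\<lambda>i. x i * tvec m 4 A x i) ` {..<4}) \<in> (\<lambda>i. x i * tvec m 4 A x i) ` {..<4}"
      by (intro Max_in) (auto simp: lessThan_empty_iff)
    ultimately show False using neg by fastforce
  qed
  have nP0: "\<not> P0_tensor m 4 A"
    unfolding P0_tensor_def using nz neg by (meson not_le)
  show ?thesis using B B0 nP nP0 by (intro exI[of _ 4]) auto
qed

end
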